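(* Let $\mathfrak{g}$ be a finite-dimensional nilpotent Lie algebra, and let $M$ be a finite-dimensional non-trivial irreducible Leibniz $\mathfrak{g}$-bimodule. Then $\mathrm{HL}^n(\mathfrak{g},M)=0$ for every positive integer $n$. Moreover, if $M$ is symmetric, then $\mathrm{HL}^n(\mathfrak{g},M)=0$ for every non-negative integer $n$.
   Context: $\mathfrak{g}$ is regarded as a left Leibniz algebra with $xy=[x,y]$. A Leibniz $\mathfrak{g}$-bimodule is a vector space $M$ with bilinear actions $x\cdot m$, $m\cdot x$ satisfying $(xy)\cdot m=x\cdot(y\cdot m)-y\cdot(x\cdot m)$, $(x\cdot m)\cdot y=x\cdot(m\cdot y)-m\cdot(xy)$, $(m\cdot x)\cdot y=m\cdot(xy)-x\cdot(m\cdot y)$; it is irreducible if nonzero with no sub-bimodules other than $0$ and $M$; non-trivial if the actions are not both zero; symmetric if $m\cdot x=-x\cdot m$. $\mathrm{HL}^n(\mathfrak{g},M)$ is the cohomology of $\mathrm{Hom}(\mathfrak{g}^{\otimes n},M)$ with $(\mathrm{d}^nf)(x_1,\dots,x_{n+1})=\sum_{i=1}^n(-1)^{i+1}x_i\cdot f(\dots,\hat{x}_i,\dots)+(-1)^{n+1}f(x_1,\dots,x_n)\cdot x_{n+1}+\sum_{i<j}(-1)^if(x_1,\dots,\hat{x}_i,\dots,x_ix_j,\dots,x_{n+1})$ ($x_ix_j$ in the $j$-th position). *)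

theory Defs
  imports Complex_Main
begin

definition lie_algebra :: "('k::field \<Rightarrow> 'g::ab_group_add \<Rightarrow> 'g) \<Rightarrow> ('g \<Rightarrow> 'g \<Rightarrow> 'g) \<Rightarrow> bool" where
  "lie_algebra scale br \<longleftrightarrow>
     Vector_Spaces.vector_space scale \<and>
     (\<forall>x. Modules.module_hom scale scale (br x)) \<and>
     (\<forall>y. Modules.module_hom scale scale (\<lambda>x. br x y)) \<and>
     (\<forall>x. br x x = 0) \<and>
     (\<forall>x y z. br x (br y z) + br y (br z x) + br z (br x y) = 0)"

definition finite_dimensional :: "('k::field \<Rightarrow> 'v::ab_group_add \<Rightarrow> 'v) \<Rightarrow> bool" where
  "finite_dimensional scale \<longleftrightarrow> (\<exists>B. finite B \<and> module.span scale B = UNIV)"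

fun lcs :: "('k::field \<Rightarrow> 'g::ab_group_add \<Rightarrow> 'g) \<Rightarrow> ('g \<Rightarrow> 'g \<Rightarrow> 'g) \<Rightarrow> nat \<Rightarrow> 'g set" where
  "lcs scale br 0 = UNIV"
| "lcs scale br (Suc k) = module.span scale {br x y | x y. y \<in> lcs scale br k}"

definition nilpotent_lie :: "('k::field \<Rightarrow> 'g::ab_group_add \<Rightarrow> 'g) \<Rightarrow> ('g \<Rightarrow> 'g \<Rightarrow> 'g) \<Rightarrow> bool" where
  "nilpotent_lie scale br \<longleftrightarrow> (\<exists>k. lcs scale br k = {0})"

text \<open>Leibniz bimodule over g (viewed as left Leibniz algebra with xy = br x y):
  left action la x m = x.m, right action ra m x = m.x.\<close>
definition leibniz_bimodule ::
  "('k::field \<Rightarrow> 'g::ab_group_add \<Rightarrow> 'g) \<Rightarrow> ('g \<Rightarrow> 'g \<Rightarrow> 'g) \<Rightarrow>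
   ('k \<Rightarrow> 'm::ab_group_add \<Rightarrow> 'm) \<Rightarrow> ('g \<Rightarrow> 'm \<Rightarrow> 'm) \<Rightarrow> ('m \<Rightarrow> 'g \<Rightarrow> 'm) \<Rightarrow> bool" where
  "leibniz_bimodule scale br smult la ra \<longleftrightarrow>
     Vector_Spaces.vector_space smult \<and>
     (\<forall>x. Modules.module_hom smult smult (la x)) \<and>
     (\<forall>m. Modules.module_hom scale smult (\<lambda>x. la x m)) \<and>
     (\<forall>x. Modules.module_hom smult smult (\<lambda>m. ra m x)) \<and>
     (\<forall>m. Modules.module_hom scale smult (ra m)) \<and>
     (\<forall>x y m. la (br x y) m = la x (la y m) - la y (la x m)) \<and>
     (\<forall>x y m. ra (la x m) y = la x (ra m y) - ra m (br x y)) \<and>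
     (\<forall>x y m. ra (ra m x) y = ra m (br x y) - la x (ra m y))"

definition sub_bimodule ::
  "('k::field \<Rightarrow> 'm::ab_group_add \<Rightarrow> 'm) \<Rightarrow> ('g \<Rightarrow> 'm \<Rightarrow> 'm) \<Rightarrow> ('m \<Rightarrow> 'g \<Rightarrow> 'm) \<Rightarrow> 'm set \<Rightarrow> bool" where
  "sub_bimodule smult la ra N \<longleftrightarrow>
     module.subspace smult N \<and> (\<forall>x. \<forall>m\<in>N. la x m \<in> N \<and> ra m x \<in> N)"

definition irreducible_bimodule ::
  "('k::field \<Rightarrow> 'm::ab_group_add \<Rightarrow> 'm) \<Rightarrow> ('g \<Rightarrow> 'm \<Rightarrow> 'm) \<Rightarrow> ('m \<Rightarrow> 'g \<Rightarrow> 'm) \<Rightarrow> bool" where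
  "irreducible_bimodule smult la ra \<longleftrightarrow>
     (\<exists>m::'m. m \<noteq> 0) \<and>
     (\<forall>N. sub_bimodule smult la ra N \<longrightarrow> N = {0} \<or> N = UNIV)"

definition nontrivial_bimodule :: "('g \<Rightarrow> 'm::ab_group_add \<Rightarrow> 'm) \<Rightarrow> ('m \<Rightarrow> 'g \<Rightarrow> 'm) \<Rightarrow> bool" where
  "nontrivial_bimodule la ra \<longleftrightarrow> \<not> ((\<forall>x m. la x m = 0) \<and> (\<forall>x m. ra m x = 0))"

definition symmetric_bimodule :: "('g \<Rightarrow> 'm::ab_group_add \<Rightarrow> 'm) \<Rightarrow> ('m \<Rightarrow> 'g \<Rightarrow> 'm) \<Rightarrow> bool" where
  "symmetric_bimodule la ra \<longleftrightarrow> (\<forall>x m. ra m x = - la x m)"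

text \<open>n-cochains: elements of Hom(g^{\<otimes>n}, M), represented as maps on lists of length n
  that are linear in each argument (values on lists of other lengths are irrelevant).\<close>
definition cochain ::
  "('k::field \<Rightarrow> 'g::ab_group_add \<Rightarrow> 'g) \<Rightarrow> ('k \<Rightarrow> 'm::ab_group_add \<Rightarrow> 'm) \<Rightarrow> nat \<Rightarrow> ('g list \<Rightarrow> 'm) \<Rightarrow> bool" where
  "cochain scale smult n f \<longleftrightarrow>
     (\<forall>us vs x y a. length us + length vs + 1 = n \<longrightarrow>
        f (us @ (x + y) # vs) = f (us @ x # vs) + f (us @ y # vs) \<and>
        f (us @ scale a x # vs) = smult a (f (us @ x # vs)))"

definition del :: "nat \<Rightarrow> 'a list \<Rightarrow> 'a list" where
  "del i xs = take i xs @ drop (Suc i) xs"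

text \<open>Leibniz coboundary d^n, with 0-based indices: for xs = [x_1,...,x_{n+1}],
  (d^n f)(xs) = sum_{i=1}^n (-1)^{i+1} x_i.f(..x_i^..) + (-1)^{n+1} f(x_1..x_n).x_{n+1}
   + sum_{i<j} (-1)^i f(x_1,..x_i^..,x_i x_j,..,x_{n+1}) (x_i x_j in the j-th position).\<close>
definition leib_d ::
  "('g \<Rightarrow> 'g \<Rightarrow> 'g) \<Rightarrow> ('k::field \<Rightarrow> 'm::ab_group_add \<Rightarrow> 'm) \<Rightarrow> ('g \<Rightarrow> 'm \<Rightarrow> 'm) \<Rightarrow> ('m \<Rightarrow> 'g \<Rightarrow> 'm) \<Rightarrow>
   nat \<Rightarrow> ('g list \<Rightarrow> 'm) \<Rightarrow> 'g list \<Rightarrow> 'm" where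
  "leib_d br smult la ra n f xs =
     (\<Sum>i<n. smult ((-1) ^ i) (la (xs ! i) (f (del i xs))))
     + smult ((-1) ^ (n + 1)) (ra (f (take n xs)) (xs ! n))
     + (\<Sum>j\<le>n. \<Sum>i<j. smult ((-1) ^ (i + 1)) (f (del i (xs[j := br (xs ! i) (xs ! j)]))))"

text \<open>HL^n(g,M) = 0: every n-cocycle is an n-coboundary (for n = 0 the coboundaries are 0).\<close>
definition HL_vanishes ::
  "('k::field \<Rightarrow> 'g::ab_group_add \<Rightarrow> 'g) \<Rightarrow> ('g \<Rightarrow> 'g \<Rightarrow> 'g) \<Rightarrow>
   ('k \<Rightarrow> 'm::ab_group_add \<Rightarrow> 'm) \<Rightarrow> ('g \<Rightarrow> 'm \<Rightarrow> 'm) \<Rightarrow> ('m \<Rightarrow> 'g \<Rightarrow> 'm) \<Rightarrow> nat \<Rightarrow> bool" where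
  "HL_vanishes scale br smult la ra n \<longleftrightarrow>
     (\<forall>f. cochain scale smult n f \<and>
          (\<forall>xs. length xs = Suc n \<longrightarrow> leib_d br smult la ra n f xs = 0) \<longrightarrow>
          (case n of
             0 \<Rightarrow> f [] = 0
           | Suc k \<Rightarrow> (\<exists>g. cochain scale smult k g \<and>
                        (\<forall>xs. length xs = n \<longrightarrow> f xs = leib_d br smult la ra k g xs))))"

end

theory Submission
  imports Defs
begin


lemma cochain_upd:
  assumes "cochain scale smult n f" "length ys = n" "p < n"
  shows "f (ys[p := x + y]) = f (ys[p := x]) + f (ys[p := y])"
    and "f (ys[p := scale a x]) = smult a (f (ys[p := x]))"
proof -
  have e: "ys[p := w] = take p ys @ w # drop (Suc p) ys" for w
    using assms by (simp add: upd_conv_take_nth_drop)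
  have l: "length (take p ys) + length (drop (Suc p) ys) + 1 = n" using assms by simp
  show "f (ys[p := x + y]) = f (ys[p := x]) + f (ys[p := y])"
    using assms(1) l unfolding e cochain_def by blast
  show "f (ys[p := scale a x]) = smult a (f (ys[p := x]))"
    using assms(1) l unfolding e cochain_def by blast
qed

lemma cochainI:
  fixes f :: "'g::ab_group_add list \<Rightarrow> 'm::ab_group_add" and scale :: "'k::field \<Rightarrow> 'g \<Rightarrow> 'g"
  assumes "\<And>ys p x y. length ys = n \<Longrightarrow> p < n \<Longrightarrow> f (ys[p := x + y]) = f (ys[p := x]) + f (ys[p := y])"
    and "\<And>ys p x a. length ys = n \<Longrightarrow> p < n \<Longrightarrow> f (ys[p := scale a x]) = smult a (f (ys[p := x]))"
  shows "cochain scale smult n f"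
  unfolding cochain_def
proof (intro allI impI conjI)
  fix us vs :: "'g list" and x y :: 'g and a :: 'k assume l: "length us + length vs + 1 = (n::nat)"
  show "f (us @ (x + y) # vs) = f (us @ x # vs) + f (us @ y # vs)"
    using assms(1)[where ys="us @ x # vs" and p="length us" and x=x and y=y] l by simp
  show "f (us @ scale a x # vs) = smult a (f (us @ x # vs))"
    using assms(2)[where ys="us @ x # vs" and p="length us" and x=x and a=a] l by simp
qed

lemma cochain_zero:
  assumes "cochain scale smult n f" "length ys = n" "p < n"
  shows "f (ys[p := 0]) = 0"
proof -
  have "f (ys[p := 0 + 0]) = f (ys[p := 0]) + f (ys[p := 0])" by (rule cochain_upd[OF assms(1-3)])
  then show ?thesis by simp
qed

definition Dz :: "('g \<Rightarrow> 'g) \<Rightarrow> ('g list \<Rightarrow> 'm::ab_group_add) \<Rightarrow> 'g list \<Rightarrow> 'm" where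
  "Dz \<delta> \<phi> xs = (\<Sum>k<length xs. \<phi> (xs[k := \<delta> (xs!k)]))"

lemma nth_del: "k < length xs - 1 \<Longrightarrow> del i xs ! k = xs ! (if k < i then k else Suc k)"
  by (auto simp: del_def nth_append min_def)

lemma length_del[simp]: "i < length xs \<Longrightarrow> length (del i xs) = length xs - 1"
  by (auto simp: del_def)

lemma del_upd_lt: "k < i \<Longrightarrow> del i (xs[k := v]) = (del i xs)[k := v]"
  by (auto simp: del_def list_update_append min_def take_update_swap list_update_beyond)

lemma del_upd_eq: "del i (xs[i := v]) = del i xs"
  by (auto simp: del_def)

lemma del_upd_gt: "i < k \<Longrightarrow> del i (xs[k := v]) = (del i xs)[k - 1 := v]"
  by (cases k) (auto simp: del_def list_update_append min_def drop_update_swap)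

lemma del_Cons_0[simp]: "del 0 (z # ys) = ys" by (simp add: del_def)
lemma del_Cons_Suc[simp]: "del (Suc i) (z # ys) = z # del i ys" by (simp add: del_def)

lemma D_del:
  assumes "i < length xs"
  shows "Dz \<delta> \<phi> (del i xs) = (\<Sum>k\<in>{..<length xs}-{i}. \<phi> (del i (xs[k := \<delta> (xs!k)])))"
  unfolding Dz_def
proof (rule sum.reindex_bij_witness[where j="\<lambda>k. if k < i then k else Suc k" and i="\<lambda>k. if k < i then k else k - 1"])
  fix k assume k: "k \<in> {..<length (del i xs)}"
  then have kl: "k < length xs - 1" using assms by simp
  show "\<phi> (del i (xs[(if k < i then k else Suc k) := \<delta> (xs ! (if k < i then k else Suc k))])) =
        \<phi> ((del i xs)[k := \<delta> (del i xs ! k)])"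
    using kl by (auto simp: del_upd_lt del_upd_gt nth_del)
qed (use assms in auto)

lemma D_key:
  assumes f: "cochain scale smult n f" and xs: "length xs = Suc n" and ij: "i < j" "j \<le> n"
    and deriv: "\<And>x y. \<delta> (br x y) = br (\<delta> x) y + br x (\<delta> y)"
  shows "(\<Sum>k<Suc n. f (del i ((xs[k := \<delta> (xs!k)])[j := br ((xs[k := \<delta> (xs!k)]) ! i) ((xs[k := \<delta> (xs!k)]) ! j)])))
       = Dz \<delta> f (del i (xs[j := br (xs!i) (xs!j)]))"
proof -
  define b where "b = br (xs!i) (xs!j)"
  define ys where "ys = xs[j := b]"
  define F where "F k = f (del i ((xs[k := \<delta> (xs!k)])[j := br ((xs[k := \<delta> (xs!k)]) ! i) ((xs[k := \<delta> (xs!k)]) ! j)]))" for k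
  define G where "G k = f (del i (ys[k := \<delta> (ys!k)]))" for k
  have ly: "length ys = Suc n" using xs by (simp add: ys_def)
  have R: "Dz \<delta> f (del i ys) = sum G ({..<Suc n} - {i})"
    unfolding G_def using D_del[of i ys \<delta> f] ly ij by simp
  have S1: "{..<Suc n} - {i} = insert j ({..<Suc n} - {i} - {j})" using ij by auto
  have R2: "sum G ({..<Suc n} - {i}) = G j + sum G ({..<Suc n} - {i} - {j})"
    by (subst S1, rule sum.insert) auto
  have L1: "sum F {..<Suc n} = F i + sum F ({..<Suc n} - {i})"
    by (rule sum.remove) (use ij in auto)
  have L2: "sum F ({..<Suc n} - {i}) = F j + sum F ({..<Suc n} - {i} - {j})"
    by (rule sum.remove) (use ij in auto)
  have E: "sum F ({..<Suc n} - {i} - {j}) = sum G ({..<Suc n} - {i} - {j})"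
  proof (rule sum.cong[OF refl])
    fix k assume k: "k \<in> {..<Suc n} - {i} - {j}"
    then have "k \<noteq> i" "k \<noteq> j" by auto
    then show "F k = G k" unfolding F_def G_def ys_def b_def using ij xs
      by (simp add: list_update_swap)
  qed
  have ji: "j \<noteq> i" using ij by simp
  have Fi: "F i = f ((del i xs)[j - 1 := br (\<delta> (xs!i)) (xs!j)])"
    unfolding F_def using ij xs ji
    by (simp add: list_update_swap[OF ji] del_upd_eq del_upd_gt)
  have Fj: "F j = f ((del i xs)[j - 1 := br (xs!i) (\<delta> (xs!j))])"
    unfolding F_def using ij xs ji
    by (simp add: del_upd_gt)
  have Gj: "G j = f ((del i xs)[j - 1 := br (\<delta> (xs!i)) (xs!j) + br (xs!i) (\<delta> (xs!j))])"
    unfolding G_def ys_def b_def using ij xs by (simp add: del_upd_gt deriv)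
  have "G j = F i + F j"
    unfolding Gj Fi Fj
    by (rule cochain_upd(1)[OF f]) (use ij xs in auto)
  then show ?thesis
    using R R2 L1 L2 E unfolding ys_def b_def F_def[symmetric] by (simp add: algebra_simps)
qed

fun apps :: "('g \<Rightarrow> 'g) \<Rightarrow> nat list \<Rightarrow> 'g list \<Rightarrow> 'g list" where
  "apps \<delta> [] xs = xs"
| "apps \<delta> (p # ps) xs = apps \<delta> ps (xs[p := \<delta> (xs!p)])"

lemma length_apps[simp]: "length (apps \<delta> ps xs) = length xs"
  by (induction ps arbitrary: xs) auto

lemma nth_apps: "p < length xs \<Longrightarrow> apps \<delta> ps xs ! p = (\<delta>^^(count_list ps p)) (xs!p)"
proof (induction ps arbitrary: xs)
  case Nil then show ?case by simp
next
  case (Cons q ps)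
  then show ?case by (auto simp: nth_list_update funpow_swap1)
qed

lemma Dpow: "((Dz \<delta>)^^N) \<phi> xs = (\<Sum>ps\<in>{ps. set ps \<subseteq> {..<length xs} \<and> length ps = N}. \<phi> (apps \<delta> ps xs))"
proof (induction N arbitrary: xs)
  case 0
  have "{ps. set ps \<subseteq> {..<length xs} \<and> length ps = 0} = {[]}" by auto
  then show ?case by simp
next
  case (Suc N)
  let ?S = "{ps. set ps \<subseteq> {..<length xs} \<and> length ps = N}"
  have "((Dz \<delta>)^^Suc N) \<phi> xs = (\<Sum>k<length xs. ((Dz \<delta>)^^N) \<phi> (xs[k := \<delta> (xs!k)]))"
    by (simp add: Dz_def)
  also have "\<dots> = (\<Sum>k<length xs. \<Sum>ps\<in>?S. \<phi> (apps \<delta> (k # ps) xs))"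
    by (simp add: Suc.IH)
  also have "\<dots> = (\<Sum>ps\<in>?S. \<Sum>k<length xs. \<phi> (apps \<delta> (k # ps) xs))"
    by (rule sum.swap)
  also have "\<dots> = (\<Sum>x\<in>?S \<times> {..<length xs}. \<phi> (apps \<delta> (snd x # fst x) xs))"
    by (simp add: sum.cartesian_product case_prod_beta)
  also have "\<dots> = (\<Sum>ps\<in>(\<lambda>(xs, n). n#xs) ` (?S \<times> {..<length xs}). \<phi> (apps \<delta> ps xs))"
    by (subst sum.reindex) (auto simp: inj_on_def intro!: sum.cong)
  also have "(\<lambda>(xs, n). n#xs) ` (?S \<times> {..<length xs}) = {ps. set ps \<subseteq> {..<length xs} \<and> length ps = Suc N}"
    by (rule lists_length_Suc_eq[symmetric])
  finally show ?case .
qed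

lemma funpow_zero:
  fixes \<delta> :: "'a::zero \<Rightarrow> 'a"
  assumes "\<delta> 0 = 0" shows "(\<delta>^^j) 0 = 0"
  by (induction j) (auto simp: assms)

lemma Dpow_nil:
  assumes f: "cochain scale smult n f" and n: "n > 0" and l: "length xs = n"
    and nil: "\<And>y. (\<delta>^^K) y = 0" and d0: "\<delta> 0 = 0"
  shows "((Dz \<delta>)^^(n*K)) f xs = 0"
proof -
  have "f (apps \<delta> ps xs) = 0" if ps: "set ps \<subseteq> {..<n}" "length ps = n * K" for ps
  proof -
    have "\<exists>p<n. K \<le> count_list ps p"
    proof (rule ccontr)
      assume "\<not> ?thesis"
      then have lt: "\<And>p. p \<in> {..<n} \<Longrightarrow> count_list ps p < K" by auto
      have "sum (count_list ps) {..<n} < sum (\<lambda>_. K) {..<n}"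
        by (rule sum_strict_mono) (use lt n in auto)
      moreover have "sum (count_list ps) {..<n} = length ps" by (rule sum_count_set) (use ps in auto)
      ultimately show False using ps by simp
    qed
    then obtain p where p: "p < n" "K \<le> count_list ps p" by blast
    have "apps \<delta> ps xs ! p = (\<delta>^^(count_list ps p - K)) ((\<delta>^^K) (xs!p))"
    proof -
      have c: "count_list ps p = (count_list ps p - K) + K" using p by simp
      have "(\<delta>^^(count_list ps p)) (xs!p) = (\<delta>^^(count_list ps p - K)) ((\<delta>^^K) (xs!p))"
        by (subst c, simp only: funpow_add comp_apply)
      then show ?thesis using nth_apps[of p xs \<delta> ps] p l by simp
    qed
    also have "\<dots> = 0" by (simp add: nil funpow_zero d0)
    finally have "apps \<delta> ps xs = (apps \<delta> ps xs)[p := 0]"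
      by (metis list_update_id)
    then show ?thesis using cochain_zero[OF f, of "apps \<delta> ps xs" p] p l by simp
  qed
  then show ?thesis unfolding Dpow using l by simp
qed

context
  fixes smult :: "'k::field \<Rightarrow> 'm::ab_group_add \<Rightarrow> 'm" and la :: "'g::ab_group_add \<Rightarrow> 'm \<Rightarrow> 'm"
    and ra :: "'m \<Rightarrow> 'g \<Rightarrow> 'm" and br :: "'g \<Rightarrow> 'g \<Rightarrow> 'g"
  assumes VS: "module smult"
    and la_hom: "\<And>x. module_hom smult smult (la x)"
    and ra_hom: "\<And>x. module_hom smult smult (\<lambda>m. ra m x)"
begin

lemma la_add: "la x (a + b) = la x a + la x b" using module_hom.add[OF la_hom] .
lemma la_0[simp]: "la x 0 = 0" using module_hom.zero[OF la_hom] .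
lemma la_sum: "la x (sum g A) = (\<Sum>a\<in>A. la x (g a))" using module_hom.sum[OF la_hom] .
lemma la_scale: "la x (smult c a) = smult c (la x a)" using module_hom.scale[OF la_hom] .
lemma ra_add: "ra (a + b) x = ra a x + ra b x" using module_hom.add[OF ra_hom] .
lemma ra_0[simp]: "ra 0 x = 0" using module_hom.zero[OF ra_hom] by simp
lemma ra_sum: "ra (sum g A) x = (\<Sum>a\<in>A. ra (g a) x)" using module_hom.sum[OF ra_hom] by simp
lemma ra_scale: "ra (smult c a) x = smult c (ra a x)" using module_hom.scale[OF ra_hom] by simp
lemmas sm = module.scale_sum_right[OF VS] module.scale_right_distrib[OF VS] module.scale_minus_left[OF VS]
  module.scale_minus_right[OF VS] module.scale_scale[OF VS] module.scale_one[OF VS] module.scale_zero_right[OF VS]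

lemma cartan:
  assumes "length xs = Suc m"
  shows "leib_d br smult la ra (Suc m) f (z # xs) + leib_d br smult la ra m (\<lambda>ys. f (z # ys)) xs
     = la z (f xs) - Dz (br z) f xs"
proof -
  have L: "{..<length xs} = {..m}" using assms by auto
  show ?thesis
  unfolding leib_d_def Dz_def L sum.lessThan_Suc_shift sum.atMost_Suc_shift
  apply (simp del: sum.lessThan_Suc sum.atMost_Suc add: sm sum.distrib sum_negf[symmetric])
  apply (simp add: sum_subtractf sum_negf)
  done
qed

lemma D_commute:
  assumes f: "cochain scale smult n f" and xs: "length xs = Suc n"
    and deriv: "\<And>x y. br z (br x y) = br (br z x) y + br x (br z y)"
    and dla: "\<And>x m. la (br z x) m = 0" and dra: "\<And>x m. ra m (br z x) = 0"
  shows "Dz (br z) (leib_d br smult la ra n f) xs = leib_d br smult la ra n (Dz (br z) f) xs"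
proof -
  define xk where "xk k = xs[k := br z (xs!k)]" for k
  have lxk[simp]: "length (xk k) = Suc n" for k using xs by (simp add: xk_def)
  have nxk: "xk k ! p = (if p = k then br z (xs!k) else xs!p)" if "p < Suc n" for k p
    using that xs by (simp add: xk_def nth_list_update)
  have 1: "(\<Sum>k<Suc n. \<Sum>i<n. smult ((-1)^i) (la (xk k ! i) (f (del i (xk k)))))
      = (\<Sum>i<n. smult ((-1)^i) (la (xs!i) (Dz (br z) f (del i xs))))"
  proof -
    have "(\<Sum>k<Suc n. \<Sum>i<n. smult ((-1)^i) (la (xk k ! i) (f (del i (xk k)))))
        = (\<Sum>i<n. \<Sum>k<Suc n. smult ((-1)^i) (la (xk k ! i) (f (del i (xk k)))))"
      by (rule sum.swap)
    also have "\<dots> = (\<Sum>i<n. smult ((-1)^i) (la (xs!i) (Dz (br z) f (del i xs))))"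
    proof (rule sum.cong[OF refl])
      fix i assume i: "i \<in> {..<n}"
      have "(\<Sum>k<Suc n. smult ((-1)^i) (la (xk k ! i) (f (del i (xk k)))))
          = smult ((-1)^i) (la (xk i ! i) (f (del i (xk i)))) +
            (\<Sum>k\<in>{..<Suc n} - {i}. smult ((-1)^i) (la (xk k ! i) (f (del i (xk k)))))"
        by (rule sum.remove) (use i in auto)
      also have "\<dots> = (\<Sum>k\<in>{..<Suc n} - {i}. smult ((-1)^i) (la (xs ! i) (f (del i (xk k)))))"
        using i by (auto simp: nxk dla sm intro!: sum.cong)
      also have "\<dots> = smult ((-1)^i) (la (xs!i) (Dz (br z) f (del i xs)))"
        using D_del[of i xs "br z" f] i xs by (simp add: la_sum sm xk_def)
      finally show "(\<Sum>k<Suc n. smult ((-1)^i) (la (xk k ! i) (f (del i (xk k)))))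
          = smult ((-1)^i) (la (xs!i) (Dz (br z) f (del i xs)))" .
    qed
    finally show ?thesis .
  qed
  have 2: "(\<Sum>k<Suc n. smult ((-1)^(n+1)) (ra (f (take n (xk k))) (xk k ! n)))
      = smult ((-1)^(n+1)) (ra (Dz (br z) f (take n xs)) (xs ! n))"
  proof -
    have "(\<Sum>k<Suc n. smult ((-1)^(n+1)) (ra (f (take n (xk k))) (xk k ! n)))
       = (\<Sum>k<n. smult ((-1)^(n+1)) (ra (f (take n (xk k))) (xk k ! n)))"
      by (simp add: nxk dra sm)
    also have "\<dots> = (\<Sum>k<n. smult ((-1)^(n+1)) (ra (f ((take n xs)[k := br z (take n xs ! k)])) (xs ! n)))"
      by (rule sum.cong[OF refl]) (auto simp: nxk xk_def take_update_swap)
    also have "\<dots> = smult ((-1)^(n+1)) (ra (Dz (br z) f (take n xs)) (xs ! n))"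
      using xs by (simp add: Dz_def ra_sum sm)
    finally show ?thesis .
  qed
  have 3: "(\<Sum>k<Suc n. \<Sum>j\<le>n. \<Sum>i<j. smult ((-1)^(i+1)) (f (del i ((xk k)[j := br (xk k ! i) (xk k ! j)]))))
     = (\<Sum>j\<le>n. \<Sum>i<j. smult ((-1)^(i+1)) (Dz (br z) f (del i (xs[j := br (xs!i) (xs!j)]))))"
  proof -
    have "(\<Sum>k<Suc n. \<Sum>j\<le>n. \<Sum>i<j. smult ((-1)^(i+1)) (f (del i ((xk k)[j := br (xk k ! i) (xk k ! j)]))))
      = (\<Sum>j\<le>n. \<Sum>k<Suc n. \<Sum>i<j. smult ((-1)^(i+1)) (f (del i ((xk k)[j := br (xk k ! i) (xk k ! j)]))))"
      by (rule sum.swap)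
    also have "\<dots> = (\<Sum>j\<le>n. \<Sum>i<j. \<Sum>k<Suc n. smult ((-1)^(i+1)) (f (del i ((xk k)[j := br (xk k ! i) (xk k ! j)]))))"
      by (rule sum.cong[OF refl], rule sum.swap)
    also have "\<dots> = (\<Sum>j\<le>n. \<Sum>i<j. smult ((-1)^(i+1)) (Dz (br z) f (del i (xs[j := br (xs!i) (xs!j)]))))"
    proof (intro sum.cong[OF refl])
      fix j i assume j: "j \<in> {..n}" and i: "i \<in> {..<j}"
      show "(\<Sum>k<Suc n. smult ((-1)^(i+1)) (f (del i ((xk k)[j := br (xk k ! i) (xk k ! j)]))))
          = smult ((-1)^(i+1)) (Dz (br z) f (del i (xs[j := br (xs!i) (xs!j)])))"
        using D_key[where br=br and \<delta>="br z" and i=i and j=j, OF f xs _ _ deriv] i j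
        by (simp add: sm[symmetric] xk_def)
    qed
    finally show ?thesis .
  qed
  show ?thesis
    unfolding leib_d_def Dz_def[of _ "leib_d _ _ _ _ _ _"] xs sum.distrib
    using 1 2 3 unfolding xk_def by simp
qed

lemma d_add: "leib_d br smult la ra n (\<lambda>ys. g ys + h ys) xs = leib_d br smult la ra n g xs + leib_d br smult la ra n h xs"
  unfolding leib_d_def by (simp add: la_add ra_add sm sum.distrib sum_subtractf sum_negf algebra_simps)

lemma d_zero: "leib_d br smult la ra n (\<lambda>ys. 0) xs = 0"
  unfolding leib_d_def by (simp add: sm)

lemma d_T:
  assumes "\<And>a b. T (a + b) = T a + T b" "\<And>c a. T (smult c a) = smult c (T a)"
    "\<And>x m. T (la x m) = la x (T m)" "\<And>x m. T (ra m x) = ra (T m) x"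
  shows "leib_d br smult la ra n (\<lambda>ys. T (g ys)) xs = T (leib_d br smult la ra n g xs)"
proof -
  interpret T: additive T by standard (rule assms(1))
  show ?thesis unfolding leib_d_def by (simp add: T.add T.sum assms(2-4))
qed

lemma cochain_add:
  assumes "cochain scale smult n g" "cochain scale smult n h"
  shows "cochain scale smult n (\<lambda>ys. g ys + h ys)"
  using assms unfolding cochain_def by (simp add: sm algebra_simps)

lemma cochain_T:
  assumes "cochain scale smult n g" "\<And>a b. T (a + b) = T a + T b" "\<And>c a. T (smult c a) = smult c (T a)"
  shows "cochain scale smult n (\<lambda>ys. T (g ys))"
  using assms unfolding cochain_def by simp

lemma cochain_iz:
  assumes "cochain scale smult (Suc m) f"
  shows "cochain scale smult m (\<lambda>ys. f (z # ys))"
  using assms unfolding cochain_def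
  by (metis (no_types, lifting) Cons_eq_appendI add_Suc length_Cons)

lemma cochain_Dz:
  fixes scale :: "'k \<Rightarrow> 'g \<Rightarrow> 'g" and \<delta> :: "'g \<Rightarrow> 'g" and f :: "'g list \<Rightarrow> 'm"
  assumes f: "cochain scale smult n f"
    and dadd: "\<And>a b. \<delta> (a + b) = \<delta> a + \<delta> b" and dsc: "\<And>c a. \<delta> (scale c a) = scale c (\<delta> a)"
  shows "cochain scale smult n (Dz \<delta> f)"
proof (rule cochainI)
  fix ys :: "'g list" and p and x y :: 'g assume l: "length ys = n" and p: "p < n"
  have "f ((ys[p := x + y])[k := \<delta> ((ys[p := x + y]) ! k)]) =
        f ((ys[p := x])[k := \<delta> ((ys[p := x]) ! k)]) + f ((ys[p := y])[k := \<delta> ((ys[p := y]) ! k)])"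
    if k: "k < n" for k
  proof (cases "k = p")
    case True
    then show ?thesis using cochain_upd(1)[OF f l p] l p by (simp add: dadd)
  next
    case False
    then show ?thesis using cochain_upd(1)[OF f, of "ys[k := \<delta> (ys!k)]" p x y] l p k
      by (simp add: list_update_swap)
  qed
  then show "Dz \<delta> f (ys[p := x + y]) = Dz \<delta> f (ys[p := x]) + Dz \<delta> f (ys[p := y])"
    unfolding Dz_def using l by (simp add: sum.distrib)
next
  fix ys :: "'g list" and p and x :: 'g and a assume l: "length ys = n" and p: "p < n"
  have "f ((ys[p := scale a x])[k := \<delta> ((ys[p := scale a x]) ! k)]) =
        smult a (f ((ys[p := x])[k := \<delta> ((ys[p := x]) ! k)]))"
    if k: "k < n" for k
  proof (cases "k = p")
    case True
    then show ?thesis using cochain_upd(2)[OF f l p] l p by (simp add: dsc)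
  next
    case False
    then show ?thesis using cochain_upd(2)[OF f, of "ys[k := \<delta> (ys!k)]" p a x] l p k
      by (simp add: list_update_swap)
  qed
  then show "Dz \<delta> f (ys[p := scale a x]) = smult a (Dz \<delta> f (ys[p := x]))"
    unfolding Dz_def using l by (simp add: sm)
qed

lemma main_ind:
  fixes scale :: "'k \<Rightarrow> 'g \<Rightarrow> 'g" and Ainv :: "'m \<Rightarrow> 'm"
  assumes AA: "\<And>m. Ainv (la z m) = m"
    and Aadd: "\<And>a b. Ainv (a + b) = Ainv a + Ainv b" and Asc: "\<And>c a. Ainv (smult c a) = smult c (Ainv a)"
    and Ala: "\<And>x m. Ainv (la x m) = la x (Ainv m)" and Ara: "\<And>x m. Ainv (ra m x) = ra (Ainv m) x"
    and deriv: "\<And>x y. br z (br x y) = br (br z x) y + br x (br z y)"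
    and dla: "\<And>x m. la (br z x) m = 0" and dra: "\<And>x m. ra m (br z x) = 0"
    and dadd: "\<And>a b. br z (a + b) = br z a + br z b" and dsc: "\<And>c a. br z (scale c a) = scale c (br z a)"
  shows "\<forall>f. cochain scale smult (Suc m) f \<and>
      (\<forall>ys. length ys = Suc (Suc m) \<longrightarrow> leib_d br smult la ra (Suc m) f ys = 0) \<and>
      (\<forall>xs. length xs = Suc m \<longrightarrow> ((Dz (br z))^^N) f xs = 0) \<longrightarrow>
      (\<exists>h. cochain scale smult m h \<and> (\<forall>xs. length xs = Suc m \<longrightarrow> f xs = leib_d br smult la ra m h xs))"
proof (induction N)
  case 0
  show ?case
  proof (intro allI impI)
    fix f :: "'g list \<Rightarrow> 'm"
    assume H: "cochain scale smult (Suc m) f \<and>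
      (\<forall>ys. length ys = Suc (Suc m) \<longrightarrow> leib_d br smult la ra (Suc m) f ys = 0) \<and>
      (\<forall>xs. length xs = Suc m \<longrightarrow> ((Dz (br z))^^0) f xs = 0)"
    show "\<exists>h. cochain scale smult m h \<and> (\<forall>xs. length xs = Suc m \<longrightarrow> f xs = leib_d br smult la ra m h xs)"
      by (rule exI[of _ "\<lambda>_. 0"]) (use H in \<open>auto simp: d_zero cochain_def sm\<close>)
  qed
next
  case (Suc N)
  show ?case
  proof (intro allI impI)
    fix f :: "'g list \<Rightarrow> 'm"
    assume H: "cochain scale smult (Suc m) f \<and>
      (\<forall>ys. length ys = Suc (Suc m) \<longrightarrow> leib_d br smult la ra (Suc m) f ys = 0) \<and>
      (\<forall>xs. length xs = Suc m \<longrightarrow> ((Dz (br z))^^Suc N) f xs = 0)"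
    then have f: "cochain scale smult (Suc m) f"
      and cyc: "\<And>ys. length ys = Suc (Suc m) \<Longrightarrow> leib_d br smult la ra (Suc m) f ys = 0"
      and nl: "\<And>xs. length xs = Suc m \<Longrightarrow> ((Dz (br z))^^N) (Dz (br z) f) xs = 0"
      by (auto simp del: funpow.simps simp add: funpow_Suc_right)
    have Df: "cochain scale smult (Suc m) (Dz (br z) f)"
      by (rule cochain_Dz[OF f dadd dsc])
    have Dcyc: "leib_d br smult la ra (Suc m) (Dz (br z) f) ys = 0" if "length ys = Suc (Suc m)" for ys
    proof -
      have "leib_d br smult la ra (Suc m) (Dz (br z) f) ys = Dz (br z) (leib_d br smult la ra (Suc m) f) ys"
        by (rule D_commute[OF f that deriv dla dra, symmetric])
      also have "\<dots> = 0" unfolding Dz_def using that by (simp add: cyc)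
      finally show ?thesis .
    qed
    obtain h where h: "cochain scale smult m h"
      and hD: "\<And>xs. length xs = Suc m \<Longrightarrow> Dz (br z) f xs = leib_d br smult la ra m h xs"
      using Suc.IH Df Dcyc nl by blast
    define g where "g ys = Ainv (f (z # ys) + h ys)" for ys
    have g: "cochain scale smult m g"
      unfolding g_def
      by (rule cochain_T[OF cochain_add[OF cochain_iz[OF f] h] Aadd Asc])
    have "f xs = leib_d br smult la ra m g xs" if xs: "length xs = Suc m" for xs
    proof -
      have "la z (f xs) = leib_d br smult la ra m (\<lambda>ys. f (z # ys)) xs + Dz (br z) f xs"
        using cartan[OF xs, of f z] cyc[of "z # xs"] xs by (simp add: algebra_simps)
      also have "\<dots> = leib_d br smult la ra m (\<lambda>ys. f (z # ys) + h ys) xs"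
        by (simp add: hD[OF xs] d_add)
      finally have "f xs = Ainv (leib_d br smult la ra m (\<lambda>ys. f (z # ys) + h ys) xs)"
        by (metis AA)
      also have "\<dots> = leib_d br smult la ra m g xs"
        unfolding g_def by (rule d_T[symmetric]) (rule Aadd Asc Ala Ara)+
      finally show ?thesis .
    qed
    with g show "\<exists>h. cochain scale smult m h \<and> (\<forall>xs. length xs = Suc m \<longrightarrow> f xs = leib_d br smult la ra m h xs)"
      by blast
  qed
qed

end



lemma dichotomy:
  assumes bim: "leibniz_bimodule scale br smult la ra" and irr: "irreducible_bimodule smult la ra"
  shows "(\<forall>x m. ra m x = - la x m) \<or> (\<forall>x m. ra m x = 0)"
proof -
  have VS: "module smult" using bim unfolding leibniz_bimodule_def module_iff_vector_space by blast
  have la_hom: "\<And>x. module_hom smult smult (la x)" and ra_hom: "\<And>x. module_hom smult smult (\<lambda>m. ra m x)"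
    and ax1: "\<And>x y m. la (br x y) m = la x (la y m) - la y (la x m)"
    and ax2: "\<And>x y m. ra (la x m) y = la x (ra m y) - ra m (br x y)"
    and ax3: "\<And>x y m. ra (ra m x) y = ra m (br x y) - la x (ra m y)"
    using bim unfolding leibniz_bimodule_def by auto
  define S where "S = {ra m x + la x m | m x. True}"
  define M0 where "M0 = module.span smult S"
  have sub: "module.subspace smult M0" unfolding M0_def by (rule module.subspace_span[OF VS])
  have SM: "S \<subseteq> M0" unfolding M0_def using module.span_base[OF VS] by blast
  have la_cl: "la y w \<in> M0" if "w \<in> M0" for y w
  proof -
    have "la y ` S \<subseteq> M0"
    proof
      fix v assume "v \<in> la y ` S"
      then obtain m x where v: "v = la y (ra m x + la x m)" unfolding S_def by blast
      have "v = (ra (la y m) x + la x (la y m)) + (ra m (br y x) + la (br y x) m)"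
        unfolding v module_hom.add[OF la_hom] using ax1[of y x m] ax2[of y m x] by (simp add: algebra_simps)
      moreover have "ra (la y m) x + la x (la y m) \<in> M0" "ra m (br y x) + la (br y x) m \<in> M0"
        using SM unfolding S_def by blast+
      ultimately show "v \<in> M0" using module.subspace_add[OF VS sub] by simp
    qed
    then have "module.span smult (la y ` S) \<subseteq> M0"
      by (rule module.span_minimal[OF VS _ sub])
    moreover have "la y ` M0 = module.span smult (la y ` S)"
      unfolding M0_def by (rule module_hom.span_image[OF la_hom, symmetric])
    ultimately have "la y ` M0 \<subseteq> M0" by simp
    then show ?thesis using that by blast
  qed
  have ra_cl: "ra w y = 0" if "w \<in> M0" for y w
  proof -
    have "S \<subseteq> {w. ra w y = 0}"
    proof
      fix v assume "v \<in> S"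
      then obtain m x where v: "v = ra m x + la x m" unfolding S_def by blast
      show "v \<in> {w. ra w y = 0}" unfolding v
        using module_hom.add[OF ra_hom, of "ra m x" "la x m"] ax2[of x m y] ax3[of m x y] by simp
    qed
    then have "M0 \<subseteq> {w. ra w y = 0}" unfolding M0_def
      by (rule module.span_minimal[OF VS _ module_hom.subspace_kernel[OF ra_hom]])
    then show ?thesis using that by blast
  qed
  have "sub_bimodule smult la ra M0"
    unfolding sub_bimodule_def
  proof (intro conjI allI ballI sub)
    fix x m assume "m \<in> M0"
    then show "la x m \<in> M0" "ra m x \<in> M0" using la_cl[of m x] ra_cl[of m x] module.subspace_0[OF VS sub] by simp_all
  qed
  then have "M0 = {0} \<or> M0 = UNIV" using irr unfolding irreducible_bimodule_def by blast
  then show ?thesis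
  proof
    assume "M0 = {0}"
    moreover have "ra m x + la x m \<in> S" for m x unfolding S_def by blast
    ultimately have "ra m x + la x m = 0" for m x using SM by blast
    then show ?thesis by (simp add: eq_neg_iff_add_eq_0)
  next
    assume "M0 = UNIV"
    then show ?thesis using ra_cl by blast
  qed
qed

lemma inj_surj_inverse:
  assumes "inj A" "surj A"
  shows "\<exists>B. (\<forall>m. B (A m) = m) \<and> (\<forall>m. A (B m) = m)"
  using assms by (metis inv_f_f surj_f_inv_f)

theorem proposition2p8:
  fixes scale :: "'k::field \<Rightarrow> 'g::ab_group_add \<Rightarrow> 'g"
    and br :: "'g \<Rightarrow> 'g \<Rightarrow> 'g"
    and smult :: "'k \<Rightarrow> 'm::ab_group_add \<Rightarrow> 'm"
    and la :: "'g \<Rightarrow> 'm \<Rightarrow> 'm"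
    and ra :: "'m \<Rightarrow> 'g \<Rightarrow> 'm"
  assumes "lie_algebra scale br"
    and "finite_dimensional scale"
    and "nilpotent_lie scale br"
    and "leibniz_bimodule scale br smult la ra"
    and "finite_dimensional smult"
    and "irreducible_bimodule smult la ra"
    and "nontrivial_bimodule la ra"
  shows "(\<forall>n. n > 0 \<longrightarrow> HL_vanishes scale br smult la ra n)
    \<and> (symmetric_bimodule la ra \<longrightarrow> (\<forall>n. HL_vanishes scale br smult la ra n))"
proof -
  note lie = assms(1) and bim = assms(4) and irr = assms(6)
  have VSg: "module scale" using lie unfolding lie_algebra_def module_iff_vector_space by blast
  have br_hom: "\<And>x. module_hom scale scale (br x)" and br_hom2: "\<And>y. module_hom scale scale (\<lambda>x. br x y)"
    and alt: "\<And>x. br x x = 0" and jac: "\<And>x y z. br x (br y z) + br y (br z x) + br z (br x y) = 0"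
    using lie unfolding lie_algebra_def by auto
  have VS: "module smult" and VVS: "vector_space smult" using bim unfolding leibniz_bimodule_def module_iff_vector_space by blast+
  have la_hom: "\<And>x. module_hom smult smult (la x)" and ra_hom: "\<And>x. module_hom smult smult (\<lambda>m. ra m x)"
    and la_hom2: "\<And>m. module_hom scale smult (\<lambda>x. la x m)"
    and ax1: "\<And>x y m. la (br x y) m = la x (la y m) - la y (la x m)"
    using bim unfolding leibniz_bimodule_def by auto
  have anti: "br x y = - br y x" for x y
  proof -
    have "br (x + y) (x + y) = br x (x + y) + br y (x + y)" by (rule module_hom.add[OF br_hom2])
    also have "\<dots> = br x x + br x y + (br y x + br y y)" by (simp only: module_hom.add[OF br_hom])
    finally show ?thesis by (simp add: alt eq_neg_iff_add_eq_0)
  qed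
  have deriv: "br z (br x y) = br (br z x) y + br x (br z y)" for z x y
  proof -
    have "br z (br x y) + br x (br y z) + br y (br z x) = 0" using jac[of z x y] by (simp add: algebra_simps)
    moreover have "br x (br y z) = - br x (br z y)" using anti[of y z] module_hom.neg[OF br_hom] by simp
    moreover have "br y (br z x) = - br (br z x) y" by (rule anti)
    ultimately show ?thesis by (simp add: algebra_simps eq_neg_iff_add_eq_0)
  qed
  have dich: "(\<forall>x m. ra m x = - la x m) \<or> (\<forall>x m. ra m x = 0)" by (rule dichotomy[OF bim irr])
  define I where "I = {x. \<forall>m. la x m = 0}"
  have la0: "la 0 m = 0" for m using module_hom.zero[OF la_hom2] by simp
  have "\<exists>x m. la x m \<noteq> 0"
  proof (rule ccontr)
    assume "\<not> ?thesis"
    then have "\<forall>x m. la x m = 0" by blast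
    with dich have "\<forall>x m. ra m x = 0" by auto
    with \<open>\<forall>x m. la x m = 0\<close> assms(7) show False unfolding nontrivial_bimodule_def by blast
  qed
  then have notI0: "\<not> lcs scale br 0 \<subseteq> I" unfolding I_def by auto
  obtain K where K: "lcs scale br K = {0}" using assms(3) unfolding nilpotent_lie_def by blast
  have PK: "lcs scale br K \<subseteq> I" unfolding K I_def using la0 by simp
  define j0 where "j0 = (LEAST j. lcs scale br j \<subseteq> I)"
  have j0: "lcs scale br j0 \<subseteq> I" unfolding j0_def by (rule LeastI[of _ K], rule PK)
  have "j0 \<noteq> 0" using j0 notI0 by auto
  then obtain j where jj: "j0 = Suc j" by (cases j0) auto
  have "\<not> lcs scale br j \<subseteq> I"
    using not_less_Least[of j "\<lambda>j. lcs scale br j \<subseteq> I"] jj unfolding j0_def by simp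
  then obtain z where zj: "z \<in> lcs scale br j" and zI: "z \<notin> I" by blast
  have brI: "br x z \<in> I" for x
  proof -
    have "br x z \<in> lcs scale br (Suc j)"
      using zj by (auto intro!: module.span_base[OF VSg])
    then show ?thesis using j0 jj by auto
  qed
  have comm: "la z (la x m) = la x (la z m)" for x m
    using ax1[of x z m] brI[of x] unfolding I_def by simp
  have dla: "la (br z x) m = 0" for x m using ax1[of z x m] comm[of x m] by simp
  have dra: "ra m (br z x) = 0" for x m using dich dla by auto
  have racomm: "la z (ra m x) = ra (la z m) x" for m x
    using dich module_hom.neg[OF la_hom] module_hom.zero[OF la_hom] comm by auto
  have dadd: "br z (a + b) = br z a + br z b" for a b using module_hom.add[OF br_hom] .
  have dsc: "br z (scale c a) = scale c (br z a)" for c a using module_hom.scale[OF br_hom] .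
  have d0: "br z 0 = 0" using module_hom.zero[OF br_hom] .
  have lcsk: "((br z)^^k) y \<in> lcs scale br k" for k y
  proof (induction k)
    case 0 then show ?case by simp
  next
    case (Suc k) then show ?case by (auto intro!: module.span_base[OF VSg])
  qed
  have nil: "((br z)^^K) y = 0" for y using lcsk[of K y] K by simp
  have "sub_bimodule smult la ra {m. la z m = 0}"
    unfolding sub_bimodule_def
  proof (intro conjI allI ballI)
    show "module.subspace smult {m. la z m = 0}" by (rule module_hom.subspace_kernel[OF la_hom])
  next
    fix x m assume "m \<in> {m. la z m = 0}"
    then show "la x m \<in> {m. la z m = 0}" "ra m x \<in> {m. la z m = 0}"
      using comm[of x m] racomm[of m x] module_hom.zero[OF la_hom] module_hom.zero[OF ra_hom] by auto
  qed
  then have "{m. la z m = 0} = {0} \<or> {m. la z m = 0} = UNIV" using irr unfolding irreducible_bimodule_def by blast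
  moreover have "{m. la z m = 0} \<noteq> UNIV" using zI unfolding I_def by auto
  ultimately have ker: "{m. la z m = 0} = {0}" by blast
  have injA: "inj (la z)"
  proof (rule injI)
    fix a b assume "la z a = la z b"
    then have "la z (a - b) = 0" using module_hom.diff[OF la_hom] by simp
    then have "a - b \<in> {m. la z m = 0}" by simp
    then show "a = b" using ker by simp
  qed
  \<comment> \<open>finite dimension gives surjectivity\<close>
  obtain B where B: "finite B" "module.span smult B = UNIV" using assms(5) unfolding finite_dimensional_def by blast
  obtain B' where B': "\<not> module.dependent smult B'" "UNIV \<subseteq> module.span smult B'"
    using vector_space.basis_exists[OF VVS, of UNIV] by blast
  have fB': "finite B'" using vector_space.independent_span_bound[OF VVS B(1) B'(1)] B(2) by simp
  have fdvs: "finite_dimensional_vector_space smult B'"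
    unfolding finite_dimensional_vector_space_def finite_dimensional_vector_space_axioms_def
    using VVS B' fB' by auto
  have surjA: "surj (la z)"
    by (rule finite_dimensional_vector_space.linear_inj_imp_surj[OF fdvs _ injA])
       (simp add: module_hom_iff_linear[symmetric] la_hom)
  obtain Ainv where AA: "\<And>m. Ainv (la z m) = m" and AA2: "\<And>m. la z (Ainv m) = m"
    using inj_surj_inverse[OF injA surjA] by blast
  have byinj: "la z a = la z b \<Longrightarrow> a = b" for a b using injA by (simp add: inj_eq)
  have Aadd: "Ainv (a + b) = Ainv a + Ainv b" for a b
    by (rule byinj) (simp add: AA2 module_hom.add[OF la_hom])
  have Asc: "Ainv (smult c a) = smult c (Ainv a)" for c a
    by (rule byinj) (simp add: AA2 module_hom.scale[OF la_hom])
  have Ala: "Ainv (la x m) = la x (Ainv m)" for x m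
    by (rule byinj) (simp add: AA2 comm)
  have Ara: "Ainv (ra m x) = ra (Ainv m) x" for x m
    by (rule byinj) (simp add: AA2 racomm)
  have pos: "HL_vanishes scale br smult la ra (Suc m)" for m
    unfolding HL_vanishes_def
  proof (intro allI impI, simp only: nat.case)
    fix f assume H: "cochain scale smult (Suc m) f \<and>
       (\<forall>xs. length xs = Suc (Suc m) \<longrightarrow> leib_d br smult la ra (Suc m) f xs = 0)"
    have "\<forall>xs. length xs = Suc m \<longrightarrow> ((Dz (br z))^^(Suc m * K)) f xs = 0"
      using Dpow_nil[where scale=scale and smult=smult and n="Suc m" and f=f and \<delta>="br z" and K=K] H nil d0 by auto
    then show "\<exists>g. cochain scale smult m g \<and> (\<forall>xs. length xs = Suc m \<longrightarrow> f xs = leib_d br smult la ra m g xs)"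
      using main_ind[where br=br and z=z and scale=scale and la=la and ra=ra and smult=smult and m=m and N="Suc m * K",
        OF VS la_hom ra_hom AA Aadd Asc Ala Ara deriv[of z] dla dra dadd dsc] H
      by blast
  qed
  have zero: "HL_vanishes scale br smult la ra 0" if sym: "symmetric_bimodule la ra"
    unfolding HL_vanishes_def
  proof (intro allI impI, simp only: nat.case)
    fix f assume H: "cochain scale smult 0 f \<and>
       (\<forall>xs. length xs = Suc 0 \<longrightarrow> leib_d br smult la ra 0 f xs = 0)"
    then have "leib_d br smult la ra 0 f [z] = 0" by auto
    then have "ra (f []) z = 0" unfolding leib_d_def by (simp add: module.scale_minus_left[OF VS] module.scale_one[OF VS])
    then have "la z (f []) = 0" using sym unfolding symmetric_bimodule_def by (metis neg_equal_0_iff_equal)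
    then show "f [] = 0" using ker by auto
  qed
  show ?thesis
  proof (intro conjI allI impI)
    fix n :: nat assume "n > 0"
    then show "HL_vanishes scale br smult la ra n" using pos by (cases n) auto
  next
    fix n :: nat assume "symmetric_bimodule la ra"
    then show "HL_vanishes scale br smult la ra n" using pos zero by (cases n) auto
  qed
qed

end
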